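(* Let $\Delta$ be a $d$-dimensional simplicial forest. Then $f_0 \geq f_d$, where $f_i$ denotes the number of $i$-dimensional faces of $\Delta$.
   Context: A simplicial complex $\Delta$ is a collection of subsets (faces) of a finite vertex set closed under taking subsets; facets are maximal faces, $\dim \tau = |\tau|-1$, and $\dim\Delta$ is the maximal dimension of a face. For facets $F_1,\dots,F_s$ write $\Delta=\langle F_1,\dots,F_s\rangle$. A facet $F$ of $\Delta$ is a leaf if either $F$ is the only facet of $\Delta$, or there is a facet $G\neq F$ of $\Delta$ with $F\cap F'\subseteq F\cap G$ for every facet $F'\neq F$ of $\Delta$. $\Delta$ is a simplicial tree if $\Delta$ is connected and every subcomplex of the form $\langle F_{i_1},\dots,F_{i_r}\rangle$ (generated by a nonempty subset of the facets) has a leaf. $\Delta$ is a simplicial forest if every connected component of $\Delta$ is a simplicial tree. *)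

theory Defs
  imports Main
begin

text \<open>A simplicial complex is represented by its (finite) set of facets Fs:
  a finite antichain of finite nonempty vertex sets. Its faces are all subsets
  of facets.\<close>

definition facet_set :: "'a set set \<Rightarrow> bool" where
  "facet_set Fs \<longleftrightarrow> finite Fs \<and> Fs \<noteq> {} \<and> (\<forall>F\<in>Fs. finite F \<and> F \<noteq> {}) \<and>
     (\<forall>F\<in>Fs. \<forall>G\<in>Fs. F \<subseteq> G \<longrightarrow> F = G)"

definition faces :: "'a set set \<Rightarrow> 'a set set" where
  "faces Fs = {\<sigma>. \<exists>F\<in>Fs. \<sigma> \<subseteq> F}"

definition fvec :: "'a set set \<Rightarrow> nat \<Rightarrow> nat" where
  "fvec Fs i = card {\<sigma>\<in>faces Fs. card \<sigma> = i + 1}"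

definition cplx_dim :: "'a set set \<Rightarrow> nat" where
  "cplx_dim Fs = Max (card ` Fs) - 1"

definition is_leaf :: "'a set set \<Rightarrow> 'a set \<Rightarrow> bool" where
  "is_leaf S F \<longleftrightarrow> F \<in> S \<and> (S = {F} \<or>
     (\<exists>G\<in>S. G \<noteq> F \<and> (\<forall>F'\<in>S. F' \<noteq> F \<longrightarrow> F \<inter> F' \<subseteq> F \<inter> G)))"

definition facet_adj :: "'a set set \<Rightarrow> ('a set \<times> 'a set) set" where
  "facet_adj Fs = {(F, G). F \<in> Fs \<and> G \<in> Fs \<and> F \<inter> G \<noteq> {}}"

definition cplx_connected :: "'a set set \<Rightarrow> bool" where
  "cplx_connected Fs \<longleftrightarrow> (\<forall>F\<in>Fs. \<forall>G\<in>Fs. (F, G) \<in> (facet_adj Fs)\<^sup>*)"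

definition simplicial_tree :: "'a set set \<Rightarrow> bool" where
  "simplicial_tree Fs \<longleftrightarrow> cplx_connected Fs \<and>
     (\<forall>S. S \<subseteq> Fs \<and> S \<noteq> {} \<longrightarrow> (\<exists>F. is_leaf S F))"

definition components :: "'a set set \<Rightarrow> 'a set set set" where
  "components Fs = (\<lambda>F. {G\<in>Fs. (F, G) \<in> (facet_adj Fs)\<^sup>*}) ` Fs"

definition simplicial_forest :: "'a set set \<Rightarrow> bool" where
  "simplicial_forest Fs \<longleftrightarrow> (\<forall>C\<in>components Fs. simplicial_tree C)"

end

theory Submission
  imports Defs
begin

lemma comp_closed:
  assumes "F \<in> {G\<in>Fs. (F0, G) \<in> (facet_adj Fs)\<^sup>*}" "F' \<in> Fs" "F \<inter> F' \<noteq> {}"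
  shows "F' \<in> {G\<in>Fs. (F0, G) \<in> (facet_adj Fs)\<^sup>*}"
proof -
  have "(F, F') \<in> facet_adj Fs" using assms unfolding facet_adj_def by auto
  then show ?thesis using assms by (auto intro: rtrancl_into_rtrancl)
qed

lemma forest_leaf:
  assumes "simplicial_forest Fs" "T \<subseteq> Fs" "T \<noteq> {}"
  shows "\<exists>F. is_leaf T F"
proof -
  obtain F0 where F0: "F0 \<in> T" using assms by auto
  define C where "C = {G\<in>Fs. (F0, G) \<in> (facet_adj Fs)\<^sup>*}"
  have "C \<in> components Fs" unfolding components_def C_def using F0 assms by auto
  then have tr: "simplicial_tree C" using assms unfolding simplicial_forest_def by auto
  have F0C: "F0 \<in> C" unfolding C_def using F0 assms by auto
  have dis: "F \<inter> F' = {}" if "F \<in> C" "F' \<in> T" "F' \<notin> C" for F F'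
    using comp_closed[of F Fs F0 F'] that assms(2) unfolding C_def by blast
  have "T \<inter> C \<subseteq> C" "T \<inter> C \<noteq> {}" using F0 F0C by auto
  then obtain F where L: "is_leaf (T \<inter> C) F" using tr unfolding simplicial_tree_def by blast
  then have FT: "F \<in> T" "F \<in> C" unfolding is_leaf_def by auto
  show ?thesis
  proof (cases "T \<inter> C = {F}")
    case True
    show ?thesis
    proof (cases "T = {F}")
      case True then show ?thesis unfolding is_leaf_def by auto
    next
      case False
      then obtain G where G: "G \<in> T" "G \<noteq> F" using FT by auto
      have "\<forall>F'\<in>T. F' \<noteq> F \<longrightarrow> F \<inter> F' \<subseteq> F \<inter> G"
      proof (intro ballI impI)
        fix F' assume "F' \<in> T" "F' \<noteq> F"
        then have "F' \<notin> C" using True by auto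
        then show "F \<inter> F' \<subseteq> F \<inter> G" using dis[OF FT(2) \<open>F' \<in> T\<close>] by auto
      qed
      then show ?thesis using G FT unfolding is_leaf_def by blast
    qed
  next
    case False
    then obtain G where G: "G \<in> T \<inter> C" "G \<noteq> F" "\<forall>F'\<in>T \<inter> C. F' \<noteq> F \<longrightarrow> F \<inter> F' \<subseteq> F \<inter> G"
      using L unfolding is_leaf_def by blast
    have "\<forall>F'\<in>T. F' \<noteq> F \<longrightarrow> F \<inter> F' \<subseteq> F \<inter> G"
    proof (intro ballI impI)
      fix F' assume a: "F' \<in> T" "F' \<noteq> F"
      show "F \<inter> F' \<subseteq> F \<inter> G"
      proof (cases "F' \<in> C")
        case True then show ?thesis using G a by auto
      next
        case False then show ?thesis using dis[OF FT(2) a(1)] by auto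
      qed
    qed
    then show ?thesis using G FT unfolding is_leaf_def by blast
  qed
qed

lemma key:
  "finite S \<Longrightarrow> card S = n \<Longrightarrow> (\<forall>T\<subseteq>S. T \<noteq> {} \<longrightarrow> (\<exists>F. is_leaf T F)) \<Longrightarrow>
   (\<forall>F\<in>S. \<forall>G\<in>S. F \<subseteq> G \<longrightarrow> F = G) \<Longrightarrow> (\<forall>F\<in>S. finite F \<and> F \<noteq> {}) \<Longrightarrow>
   card S \<le> card (\<Union>S)"
proof (induction n arbitrary: S rule: less_induct)
  case (less n S)
  show ?case
  proof (cases "S = {}")
    case True then show ?thesis by simp
  next
    case False
    have finU: "finite (\<Union>S)" using less.prems by auto
    obtain F where L: "is_leaf S F" using less.prems False by blast
    then have FS: "F \<in> S" unfolding is_leaf_def by auto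
    have IH: "card (S - {F}) \<le> card (\<Union>(S - {F}))"
    proof -
      have "card (S - {F}) < n" using card_Diff1_less[OF less.prems(1) FS] less.prems(2) by simp
      moreover have "\<forall>T\<subseteq>S - {F}. T \<noteq> {} \<longrightarrow> (\<exists>F. is_leaf T F)"
      proof (intro allI impI)
        fix T assume "T \<subseteq> S - {F}" "T \<noteq> {}"
        then show "\<exists>F. is_leaf T F" using less.prems(3) by (meson Diff_subset order_trans)
      qed
      moreover have "finite (S - {F})" using less.prems(1) by simp
      moreover have "\<forall>F'\<in>S - {F}. \<forall>G\<in>S - {F}. F' \<subseteq> G \<longrightarrow> F' = G" using less.prems(4) by simp
      moreover have "\<forall>F'\<in>S - {F}. finite F' \<and> F' \<noteq> {}" using less.prems(5) by simp
      ultimately show ?thesis using less.IH[of "card (S - {F})" "S - {F}"] by blast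
    qed
    obtain v where v: "v \<in> F" "v \<notin> \<Union>(S - {F})"
    proof (cases "S = {F}")
      case True
      have "F \<noteq> {}" using less.prems(5) FS by blast
      then obtain v where "v \<in> F" by blast
      then show ?thesis using that True by simp
    next
      case False
      then obtain G where G: "G \<in> S" "G \<noteq> F" "\<forall>F'\<in>S. F' \<noteq> F \<longrightarrow> F \<inter> F' \<subseteq> F \<inter> G"
        using L unfolding is_leaf_def by blast
      have "\<not> F \<subseteq> G" using less.prems(4) FS G(1,2) by metis
      then obtain v where "v \<in> F" "v \<notin> G" by blast
      then show ?thesis using that G by blast
    qed
    have sub: "insert v (\<Union>(S - {F})) \<subseteq> \<Union>S" using v FS by auto
    have "card (insert v (\<Union>(S - {F}))) = Suc (card (\<Union>(S - {F})))"
      proof -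
      have "finite (\<Union>(S - {F}))" using finU by (meson Diff_subset Union_mono finite_subset)
      then show ?thesis using v(2) by simp
    qed
    moreover have "card (insert v (\<Union>(S - {F}))) \<le> card (\<Union>S)" using card_mono[OF finU sub] .
    moreover have "card S = Suc (card (S - {F}))" using card_Suc_Diff1[OF less.prems(1) FS] by simp
    ultimately show ?thesis using IH by linarith
  qed
qed

theorem lemma2p5:
  fixes Fs :: "'a set set" and d :: nat
  assumes "facet_set Fs"
    and "cplx_dim Fs = d"
    and "simplicial_forest Fs"
  shows "fvec Fs 0 \<ge> fvec Fs d"
proof -
  have fin: "finite Fs" "Fs \<noteq> {}" "\<forall>F\<in>Fs. finite F \<and> F \<noteq> {}"
    "\<forall>F\<in>Fs. \<forall>G\<in>Fs. F \<subseteq> G \<longrightarrow> F = G" using assms(1) unfolding facet_set_def by auto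
  obtain F1 where "F1 \<in> Fs" using fin by auto
  then have "card F1 \<ge> 1" using fin by (simp add: Suc_leI card_gt_0_iff)
  then have M1: "Max (card ` Fs) \<ge> 1" using \<open>F1 \<in> Fs\<close> fin
    by (meson Max_ge dual_order.trans finite_imageI imageI)
  have Md: "Max (card ` Fs) = d + 1" using assms(2) M1 unfolding cplx_dim_def by simp
  have s1: "{\<sigma>\<in>faces Fs. card \<sigma> = d + 1} \<subseteq> Fs"
  proof
    fix \<sigma> assume "\<sigma> \<in> {\<sigma>\<in>faces Fs. card \<sigma> = d + 1}"
    then obtain F where F: "F \<in> Fs" "\<sigma> \<subseteq> F" "card \<sigma> = d + 1" unfolding faces_def by auto
    have "card F \<le> d + 1" using Md F fin by (metis Max_ge finite_imageI imageI)
    moreover have "finite F" using F fin by blast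
    ultimately have "\<sigma> = F" using F by (metis card_seteq)
    then show "\<sigma> \<in> Fs" using F by simp
  qed
  have e0: "{\<sigma>\<in>faces Fs. card \<sigma> = 0 + 1} = (\<lambda>v. {v}) ` (\<Union>Fs)"
    unfolding faces_def by (auto simp: card_Suc_eq)
  have "fvec Fs 0 = card (\<Union>Fs)" unfolding fvec_def e0 by (simp add: card_image)
  moreover have "fvec Fs d \<le> card Fs" unfolding fvec_def using card_mono[OF fin(1) s1] .
  moreover have "card Fs \<le> card (\<Union>Fs)"
    using key[OF fin(1) refl _ fin(4) fin(3)] forest_leaf[OF assms(3)] by blast
  ultimately show ?thesis by linarith
qed

end
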